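(* Let $l>0$ and $(a,M)\in\mathcal B_l$. Then $G_2$ is twice differentiable at $r_{\Delta,frac}$, and there is $b=b(a,M,l)>0$ such that for all $r\in(r_+,\bar r_+)$ $$\frac{2V_{axi}(r)\,G_2'(r)}{g_1(r)}\ \ge\ b\,\frac{r^2+a^2}{r\Delta(r)},$$ where $G_2'=\frac{dG_2}{dr^\star}$.
   Context: $\Delta(r)=(r^2+a^2)(1-\frac{r^2}{l^2})-2Mr$; $(a,M)\in\mathcal B_l$ means $\Delta$ has four distinct real roots $\bar r_-<0\le r_-<r_+<\bar r_+$. The tortoise coordinate $r^\star$ satisfies $\frac{dr^\star}{dr}=\frac{r^2+a^2}{\Delta}$. $g_1=\frac{r^2+a^2}{\sqrt\Delta}$, $V_{axi}=\frac{(r^2+a^2)^2}{\Delta}$. $r_{\Delta,frac}\in(r_+,\bar r_+)$ is the unique critical point (maximum) of $\frac{\Delta}{(r^2+a^2)^2}$ on $(r_+,\bar r_+)$. $G_2^2=V_{axi}-\min_{[r_+,\bar r_+]}V_{axi}$, and $G_2=\sqrt{G_2^2}$ for $r\ge r_{\Delta,frac}$, $G_2=-\sqrt{G_2^2}$ for $r\le r_{\Delta,frac}$. *)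

theory Defs
  imports "HOL-Analysis.Analysis"
begin

definition Delta :: "real \<Rightarrow> real \<Rightarrow> real \<Rightarrow> real \<Rightarrow> real" where
  "Delta l a M r = (r\<^sup>2 + a\<^sup>2) * (1 - r\<^sup>2 / l\<^sup>2) - 2 * M * r"

text \<open>The four distinct real roots of Delta, ordered as in the definition of B_l.
  Delta is a quartic with nonzero leading coefficient, so these are all its roots.\<close>
definition Bl_roots :: "real \<Rightarrow> real \<Rightarrow> real \<Rightarrow> real \<Rightarrow> real \<Rightarrow> real \<Rightarrow> real \<Rightarrow> bool" where
  "Bl_roots l a M rmb rm rp rpb \<longleftrightarrow>
     rmb < 0 \<and> 0 \<le> rm \<and> rm < rp \<and> rp < rpb \<and>
     Delta l a M rmb = 0 \<and> Delta l a M rm = 0 \<and> Delta l a M rp = 0 \<and> Delta l a M rpb = 0"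

definition in_Bl :: "real \<Rightarrow> real \<Rightarrow> real \<Rightarrow> bool" where
  "in_Bl l a M \<longleftrightarrow> (\<exists>rmb rm rp rpb. Bl_roots l a M rmb rm rp rpb)"

definition g1 :: "real \<Rightarrow> real \<Rightarrow> real \<Rightarrow> real \<Rightarrow> real" where
  "g1 l a M r = (r\<^sup>2 + a\<^sup>2) / sqrt (Delta l a M r)"

definition V_axi :: "real \<Rightarrow> real \<Rightarrow> real \<Rightarrow> real \<Rightarrow> real" where
  "V_axi l a M r = (r\<^sup>2 + a\<^sup>2)\<^sup>2 / Delta l a M r"

definition r_frac :: "real \<Rightarrow> real \<Rightarrow> real \<Rightarrow> real \<Rightarrow> real \<Rightarrow> real" where
  "r_frac l a M rp rpb = (THE r. rp < r \<and> r < rpb \<and>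
      deriv (\<lambda>s. Delta l a M s / (s\<^sup>2 + a\<^sup>2)\<^sup>2) r = 0)"

text \<open>min of V_axi over [rp, rpb]; V_axi is +infinity at the endpoints (Delta = 0),
  so the minimum is the infimum over the open interval.\<close>
definition V_min :: "real \<Rightarrow> real \<Rightarrow> real \<Rightarrow> real \<Rightarrow> real \<Rightarrow> real" where
  "V_min l a M rp rpb = Inf (V_axi l a M ` {rp<..<rpb})"

definition G2sq :: "real \<Rightarrow> real \<Rightarrow> real \<Rightarrow> real \<Rightarrow> real \<Rightarrow> real \<Rightarrow> real" where
  "G2sq l a M rp rpb r = V_axi l a M r - V_min l a M rp rpb"

definition G2 :: "real \<Rightarrow> real \<Rightarrow> real \<Rightarrow> real \<Rightarrow> real \<Rightarrow> real \<Rightarrow> real" where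
  "G2 l a M rp rpb r =
     (if r \<ge> r_frac l a M rp rpb then sqrt (G2sq l a M rp rpb r)
      else - sqrt (G2sq l a M rp rpb r))"

text \<open>Derivative of G2 with respect to the tortoise coordinate r*:
  dG2/dr* = (dG2/dr) * Delta/(r^2+a^2), since dr*/dr = (r^2+a^2)/Delta.\<close>
definition G2' :: "real \<Rightarrow> real \<Rightarrow> real \<Rightarrow> real \<Rightarrow> real \<Rightarrow> real \<Rightarrow> real" where
  "G2' l a M rp rpb r = deriv (G2 l a M rp rpb) r * Delta l a M r / (r\<^sup>2 + a\<^sup>2)"

end

theory Submission imports Defs begin

lemma cubic_fact:
  fixes c3 c2 c1 c0 x1 x2 x3 x :: real
  assumes d12: "x1 \<noteq> x2" and d13: "x1 \<noteq> x3" and d23: "x2 \<noteq> x3"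
    and r1: "c3*x1^3+c2*x1^2+c1*x1+c0 = 0"
    and r2: "c3*x2^3+c2*x2^2+c1*x2+c0 = 0"
    and r3: "c3*x3^3+c2*x3^2+c1*x3+c0 = 0"
  shows "c3*x^3+c2*x^2+c1*x+c0 = c3*(x-x1)*(x-x2)*(x-x3)"
proof -
  have e12: "(x1-x2)*(c3*(x1^2+x1*x2+x2^2)+c2*(x1+x2)+c1) = 0"
    using r1 r2 by (simp add: algebra_simps power2_eq_square power3_eq_cube)
  have e13: "(x1-x3)*(c3*(x1^2+x1*x3+x3^2)+c2*(x1+x3)+c1) = 0"
    using r1 r3 by (simp add: algebra_simps power2_eq_square power3_eq_cube)
  have f12: "c3*(x1^2+x1*x2+x2^2)+c2*(x1+x2)+c1 = 0" using e12 d12 by simp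
  have f13: "c3*(x1^2+x1*x3+x3^2)+c2*(x1+x3)+c1 = 0" using e13 d13 by simp
  have "(x2-x3)*(c3*(x1+x2+x3)+c2) = 0"
    using f12 f13 by (simp add: algebra_simps power2_eq_square)
  hence "c3*(x1+x2+x3)+c2 = 0" using d23 by simp
  hence c2: "c2 = -c3*(x1+x2+x3)" by (simp add: algebra_simps)
  have c1: "c1 = c3*(x1*x2+x1*x3+x2*x3)" using f12 c2 by (simp add: algebra_simps power2_eq_square)
  have c0: "c0 = -c3*x1*x2*x3" using r1 c1 c2 by (simp add: algebra_simps power2_eq_square power3_eq_cube)
  show ?thesis unfolding c0 c1 c2 by (simp add: algebra_simps power2_eq_square power3_eq_cube)
qed

lemma quartic_fact:
  fixes c4 c3 c2 c1 c0 y1 y2 y3 y4 x :: real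
  assumes "y1 \<noteq> y2" "y1 \<noteq> y3" "y1 \<noteq> y4" "y2 \<noteq> y3" "y2 \<noteq> y4" "y3 \<noteq> y4"
    and r1: "c4*y1^4+c3*y1^3+c2*y1^2+c1*y1+c0 = 0"
    and r2: "c4*y2^4+c3*y2^3+c2*y2^2+c1*y2+c0 = 0"
    and r3: "c4*y3^4+c3*y3^3+c2*y3^2+c1*y3+c0 = 0"
    and r4: "c4*y4^4+c3*y4^3+c2*y4^2+c1*y4+c0 = 0"
  shows "c4*x^4+c3*x^3+c2*x^2+c1*x+c0 = c4*(x-y1)*(x-y2)*(x-y3)*(x-y4)"
proof -
  define g where "g = (\<lambda>x::real. c4*x^4+c3*x^3+c2*x^2+c1*x+c0 - c4*(x-y1)*(x-y2)*(x-y3)*(x-y4))"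
  define d3 where "d3 = c3 + c4*(y1+y2+y3+y4)"
  define d2 where "d2 = c2 - c4*(y1*y2+y1*y3+y1*y4+y2*y3+y2*y4+y3*y4)"
  define d1 where "d1 = c1 + c4*(y1*y2*y3+y1*y2*y4+y1*y3*y4+y2*y3*y4)"
  define d0 where "d0 = c0 - c4*y1*y2*y3*y4"
  have gx: "g x = d3*x^3+d2*x^2+d1*x+d0" for x
    unfolding g_def d3_def d2_def d1_def d0_def
    by (simp add: algebra_simps power2_eq_square power3_eq_cube power4_eq_xxxx)
  have "g y1 = 0" "g y2 = 0" "g y3 = 0" "g y4 = 0" using r1 r2 r3 r4 unfolding g_def by simp_all
  hence z: "d3*y1^3+d2*y1^2+d1*y1+d0 = 0" "d3*y2^3+d2*y2^2+d1*y2+d0 = 0"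
     "d3*y3^3+d2*y3^2+d1*y3+d0 = 0" "d3*y4^3+d2*y4^2+d1*y4+d0 = 0" using gx by simp_all
  have F: "d3*x^3+d2*x^2+d1*x+d0 = d3*(x-y1)*(x-y2)*(x-y3)" for x
    by (rule cubic_fact) (use assms z in auto)
  have "d3*(y4-y1)*(y4-y2)*(y4-y3) = 0" using F[of y4] z(4) by simp
  hence "d3 = 0" using assms by simp
  hence "g x = 0" using F[of x] gx[of x] by simp
  thus ?thesis unfolding g_def by simp
qed

definition dD :: "real \<Rightarrow> real \<Rightarrow> real \<Rightarrow> real \<Rightarrow> real" where
  "dD l a M r = -4*r^3/l^2 + 2*(1-a^2/l^2)*r - 2*M"
definition Xi :: "real \<Rightarrow> real \<Rightarrow> real" where "Xi l a = 1 + a^2/l^2"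
definition Pc :: "real \<Rightarrow> real \<Rightarrow> real \<Rightarrow> real \<Rightarrow> real" where
  "Pc l a M r = Xi l a*r^3 - 3*M*r^2 + Xi l a*a^2*r + M*a^2"
definition Qf :: "real \<Rightarrow> real \<Rightarrow> real \<Rightarrow> real \<Rightarrow> real \<Rightarrow> real" where
  "Qf l a M vv r = (r^2+a^2)^2 - vv * Delta l a M r"
definition Qd :: "real \<Rightarrow> real \<Rightarrow> real \<Rightarrow> real \<Rightarrow> real \<Rightarrow> real" where
  "Qd l a M vv r = 4*r*(r^2+a^2) - vv * dD l a M r"
definition Rf :: "real \<Rightarrow> real \<Rightarrow> real \<Rightarrow> real \<Rightarrow> real \<Rightarrow> real \<Rightarrow> real" where
  "Rf l a M vv r0 r = (1+vv/l^2)*r^2 + 2*r0*(1+vv/l^2)*r + (2*a^2 - vv*(1-a^2/l^2) + 3*r0^2*(1+vv/l^2))"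
definition Rd :: "real \<Rightarrow> real \<Rightarrow> real \<Rightarrow> real \<Rightarrow> real \<Rightarrow> real \<Rightarrow> real" where
  "Rd l a M vv r0 r = 2*(1+vv/l^2)*r + 2*r0*(1+vv/l^2)"

lemma Delta_expand: "Delta l a M r = (-1/l^2)*r^4 + 0*r^3 + (1-a^2/l^2)*r^2 + (-2*M)*r + a^2"
  unfolding Delta_def by (simp add: algebra_simps power2_eq_square power4_eq_xxxx add_divide_distrib)

lemma DERIV_Delta: assumes "l \<noteq> 0" shows "(Delta l a M has_real_derivative dD l a M r) (at r)"
proof -
  have "((\<lambda>r. (r\<^sup>2 + a\<^sup>2) * (1 - r\<^sup>2 / l\<^sup>2) - 2 * M * r) has_real_derivative
      (2*r) * (1 - r\<^sup>2 / l\<^sup>2) + (r\<^sup>2 + a\<^sup>2) * (-(2*r)/l^2) - 2*M) (at r)"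
    using assms by (auto intro!: derivative_eq_intros simp: power2_eq_square)
  moreover have "(2*r) * (1 - r\<^sup>2 / l\<^sup>2) + (r\<^sup>2 + a\<^sup>2) * (-(2*r)/l^2) - 2*M = dD l a M r"
    unfolding dD_def by (simp add: algebra_simps power2_eq_square power3_eq_cube diff_divide_distrib add_divide_distrib)
  ultimately show ?thesis unfolding Delta_def[abs_def] by simp
qed

lemma key_id: "4*r*Delta l a M r - (r^2+a^2)*dD l a M r = 2*Pc l a M r"
  unfolding Delta_def dD_def Pc_def Xi_def
  by (simp add: algebra_simps power2_eq_square power3_eq_cube diff_divide_distrib add_divide_distrib)

lemma Q_id: "Qf l a M vv r = (r-r0)^2 * Rf l a M vv r0 r + Qd l a M vv r0 * (r-r0) + Qf l a M vv r0"
  unfolding Qf_def Qd_def Rf_def Delta_def dD_def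
  by (simp add: algebra_simps power2_eq_square power3_eq_cube diff_divide_distrib add_divide_distrib)

lemma Qd_id: "Qd l a M vv r = 2*(r-r0)*Rf l a M vv r0 r + (r-r0)^2 * Rd l a M vv r0 r + Qd l a M vv r0"
  unfolding Qd_def Rf_def Rd_def dD_def
  by (simp add: algebra_simps power2_eq_square power3_eq_cube diff_divide_distrib add_divide_distrib)

lemma QW_id: "Qd l a M vv r * Delta l a M r - Qf l a M vv r * dD l a M r = 2*(r^2+a^2)*Pc l a M r"
proof -
  have "Qd l a M vv r * Delta l a M r - Qf l a M vv r * dD l a M r
     = (r^2+a^2)*(4*r*Delta l a M r - (r^2+a^2)*dD l a M r)"
    unfolding Qd_def Qf_def by (simp add: algebra_simps power2_eq_square)
  thus ?thesis using key_id by simp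
qed

lemma DERIV_sq: "((\<lambda>s::real. (s^2+a^2)^2) has_real_derivative 4*r*(r^2+a^2)) (at r)"
  by (auto intro!: derivative_eq_intros simp: power2_eq_square algebra_simps)

lemma DERIV_f: assumes "l \<noteq> 0" "r^2+a^2 \<noteq> 0"
  shows "((\<lambda>s. Delta l a M s/(s^2+a^2)^2) has_real_derivative -2*Pc l a M r/(r^2+a^2)^3) (at r)"
proof -
  have "((\<lambda>s. Delta l a M s/(s^2+a^2)^2) has_real_derivative
     (dD l a M r * (r^2+a^2)^2 - Delta l a M r * (4*r*(r^2+a^2))) / ((r^2+a^2)^2 * (r^2+a^2)^2)) (at r)"
    by (rule DERIV_divide[OF DERIV_Delta[OF assms(1)] DERIV_sq]) (use assms in simp)
  moreover have "(dD l a M r * (r^2+a^2)^2 - Delta l a M r * (4*r*(r^2+a^2))) / ((r^2+a^2)^2 * (r^2+a^2)^2)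
     = -2*Pc l a M r/(r^2+a^2)^3"
  proof -
    have h: "dD l a M r * (r^2+a^2)^2 - Delta l a M r * (4*r*(r^2+a^2)) = -(r^2+a^2)*(2*Pc l a M r)"
      unfolding key_id[symmetric] by (simp add: algebra_simps power2_eq_square)
    have g: "\<And>A Y::real. A \<noteq> 0 \<Longrightarrow> (-A*(2*Y))/(A^2*A^2) = -2*Y/A^3"
      by (simp add: power2_eq_square power3_eq_cube field_simps)
    show ?thesis by (subst h) (rule g[OF assms(2)])
  qed
  ultimately show ?thesis by simp
qed

lemma DERIV_V: assumes "l \<noteq> 0" "Delta l a M r \<noteq> 0"
  shows "(V_axi l a M has_real_derivative 2*(r^2+a^2)*Pc l a M r/(Delta l a M r)^2) (at r)"
proof -
  have "((\<lambda>s. (s^2+a^2)^2 / Delta l a M s) has_real_derivative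
     (4*r*(r^2+a^2) * Delta l a M r - (r^2+a^2)^2 * dD l a M r) / (Delta l a M r * Delta l a M r)) (at r)"
    by (rule DERIV_divide[OF DERIV_sq DERIV_Delta[OF assms(1)]]) (use assms in simp)
  moreover have "4*r*(r^2+a^2) * Delta l a M r - (r^2+a^2)^2 * dD l a M r = (r^2+a^2)*(2*Pc l a M r)"
      unfolding key_id[symmetric] by (simp add: algebra_simps power2_eq_square)
  moreover have "(r^2+a^2)*(2*Pc l a M r) / (Delta l a M r * Delta l a M r) = 2*(r^2+a^2)*Pc l a M r/(Delta l a M r)^2"
    by (simp add: power2_eq_square)
  ultimately show ?thesis unfolding V_axi_def[abs_def] by metis
qed

lemma cont_eq_at:
  fixes g h :: "real \<Rightarrow> real"
  assumes "isCont g c" "isCont h c" "\<And>x. x \<noteq> c \<Longrightarrow> g x = h x"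
  shows "g c = h c"
proof -
  have 1: "g \<midarrow>c\<rightarrow> g c" using assms(1) by (simp add: isCont_def)
  have "h \<midarrow>c\<rightarrow> h c" using assms(2) by (simp add: isCont_def)
  moreover have "\<forall>\<^sub>F x in at c. h x = g x" using assms(3) by (auto simp: eventually_at_filter)
  ultimately have 2: "g \<midarrow>c\<rightarrow> h c" using tendsto_cong by metis
  show ?thesis using LIM_unique[OF 1 2] .
qed

lemma DERIV_Rf: "l \<noteq> 0 \<Longrightarrow> (Rf l a M vv r0 has_real_derivative Rd l a M vv r0 r) (at r)"
  unfolding Rf_def[abs_def] Rd_def
  by (auto intro!: derivative_eq_intros simp: power2_eq_square algebra_simps)

lemma alg:
  fixes sR sD y A B K R D :: real
  assumes "sR>0" "sD>0" "R = sR^2" "D = sD^2" "2*R*D + y*(A*D - R*B) = 2*K"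
  shows "(((1-0)* sR + inverse sR/2*A*y)* sD - y* sR*(inverse sD/2*B))/(sD* sD) = K/(sR*D* sD)"
proof -
  have K: "K = (2* sR^2* sD^2 + y*(A* sD^2 - sR^2*B))/2" using assms(3-5) by simp
  show ?thesis unfolding K assms(4) using assms(1,2) by (simp add: field_simps power2_eq_square)
qed

lemma fin_ineq:
  fixes A D sD sR r b X q1 q2 :: real
  assumes "A > 0" "D > 0" "sD > 0" "sR > 0" "r > 0" "b \<le> 2*X*r*q1*q2/sR"
  shows "b*A/(r*D) \<le> 2*(A^2/D)*((X*A*q1*q2/(sR*D* sD))*D/A)/(A/sD)"
proof -
  have e: "2*(A^2/D)*((X*A*q1*q2/(sR*D* sD))*D/A)/(A/sD) = (2*X*r*q1*q2/sR) * (A/(r*D))"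
    using assms(1-5) by (simp add: field_simps power2_eq_square)
  have "b*(A/(r*D)) \<le> (2*X*r*q1*q2/sR) * (A/(r*D))"
    by (rule mult_right_mono[OF assms(6)]) (use assms in simp)
  thus ?thesis unfolding e by simp
qed

theorem mainTheorem10:
  fixes l a M rmb rm rp rpb :: real
  assumes "l > 0"
    and "Bl_roots l a M rmb rm rp rpb"
  shows "(\<forall>\<^sub>F s in nhds (r_frac l a M rp rpb). G2 l a M rp rpb differentiable at s)
      \<and> deriv (G2 l a M rp rpb) differentiable at (r_frac l a M rp rpb)
      \<and> (\<forall>r\<in>{rp<..<rpb}. G2 l a M rp rpb differentiable at r)
      \<and> (\<exists>b>0. \<forall>r\<in>{rp<..<rpb}.
           2 * V_axi l a M r * G2' l a M rp rpb r / g1 l a M r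
             \<ge> b * (r\<^sup>2 + a\<^sup>2) / (r * Delta l a M r))"
proof -
  have l0: "l \<noteq> 0" using assms(1) by simp
  have o: "rmb < 0" "0 \<le> rm" "rm < rp" "rp < rpb"
    and z: "Delta l a M rmb = 0" "Delta l a M rm = 0" "Delta l a M rp = 0" "Delta l a M rpb = 0"
    using assms(2) unfolding Bl_roots_def by auto
  have Dfac: "Delta l a M r = (-1/l^2)*(r-rmb)*(r-rm)*(r-rp)*(r-rpb)" for r
    unfolding Delta_expand by (rule quartic_fact) (use o z in \<open>auto simp: Delta_expand\<close>)
  have Dpos: "Delta l a M r > 0" if "rp < r" "r < rpb" for r
  proof -
    have "(r-rmb)*(r-rm)*(r-rp)*(rpb-r) > 0" using o that by (auto intro!: mult_pos_pos)
    moreover have "Delta l a M r = (1/l^2) * ((r-rmb)*(r-rm)*(r-rp)*(rpb-r))"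
    proof -
      have gen: "\<And>k X y w::real. ((-1)/k)*X*(y-w) = (1/k)*(X*(w-y))" by (simp add: algebra_simps diff_divide_distrib)
      show ?thesis unfolding Dfac using gen[of "l^2" "(r-rmb)*(r-rm)*(r-rp)" r rpb] by (simp add: mult.assoc)
    qed
    ultimately show ?thesis using l0 by simp
  qed
  define f where "f = (\<lambda>s. Delta l a M s/(s^2+a^2)^2)"
  have fD: "(f has_real_derivative -2*Pc l a M r/(r^2+a^2)^3) (at r)" if "r^2+a^2 \<noteq> 0" for r
    unfolding f_def using DERIV_f[OF l0 that] .
  have rolle: "\<exists>x. u < x \<and> x < w \<and> Pc l a M x = 0"
    if "u < w" "Delta l a M u = 0" "Delta l a M w = 0" "\<And>s. u \<le> s \<Longrightarrow> s \<le> w \<Longrightarrow> s^2+a^2 \<noteq> 0" for u w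
  proof -
    have "\<exists>x>u. x < w \<and> (f has_real_derivative 0) (at x)"
    proof (rule Rolle)
      show "u < w" by fact
      show "f u = f w" unfolding f_def using that by simp
      show "continuous_on {u..w} f"
        using fD that(4) by (intro continuous_at_imp_continuous_on ballI DERIV_isCont) auto
      show "f differentiable at x" if "u < x" "x < w" for x
      proof -
        have "x^2+a^2 \<noteq> 0" using \<open>\<And>s. u \<le> s \<Longrightarrow> s \<le> w \<Longrightarrow> s^2+a^2 \<noteq> 0\<close>[of x] that by linarith
        thus ?thesis using fD unfolding real_differentiable_def by blast
      qed
    qed
    then obtain x where x: "u < x" "x < w" "(f has_real_derivative 0) (at x)" by blast
    have "x^2+a^2 \<noteq> 0" using that(4)[of x] x by linarith
    hence "-2*Pc l a M x/(x^2+a^2)^3 = 0" using DERIV_unique[OF fD x(3)] by simp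
    hence "Pc l a M x = 0" using \<open>x^2+a^2 \<noteq> 0\<close> by simp blast
    thus ?thesis using x by blast
  qed
  have posI: "s^2+a^2 \<noteq> 0" if "0 < s" for s using that
    by (metis add_nonneg_eq_0_iff less_numeral_extra(3) power_not_zero zero_le_power2)
  obtain x3 where x3: "rp < x3" "x3 < rpb" "Pc l a M x3 = 0"
    using rolle[OF o(4) z(3) z(4)] posI o by force
  have Xi0: "Xi l a > 0" unfolding Xi_def by (simp add: add_pos_nonneg)
  obtain x1 x2 where x12: "x1 \<le> x2" "x2 < rp" and Pfac: "\<And>r. Pc l a M r = Xi l a*(r-x1)*(r-x2)*(r-x3)"
  proof (cases "a = 0")
    case True
    have Pe: "Pc l a M r = r^2*(r - 3*M)" for r unfolding Pc_def Xi_def True by (simp add: algebra_simps power2_eq_square power3_eq_cube)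
    have "x3 > 0" using x3 o by simp
    hence "x3 = 3*M" using x3(3) Pe[of x3] by simp
    hence "Pc l a M r = Xi l a*(r-0)*(r-0)*(r-x3)" for r unfolding Pe by (simp add: Xi_def True power2_eq_square)
    thus ?thesis using that[of 0 0] o by simp
  next
    case False
    have nz: "s^2+a^2 \<noteq> 0" for s using False by (simp add: add_nonneg_eq_0_iff)
    obtain x1 where x1: "rmb < x1" "x1 < rm" "Pc l a M x1 = 0" using rolle[OF _ z(1) z(2) nz] o by force
    obtain x2 where x2: "rm < x2" "x2 < rp" "Pc l a M x2 = 0" using rolle[OF _ z(2) z(3) nz] o by force
    have "Xi l a*r^3 + (-3*M)*r^2 + (Xi l a*a^2)*r + M*a^2 = Xi l a*(r-x1)*(r-x2)*(r-x3)" for r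
      by (rule cubic_fact) (use x1 x2 x3 o in \<open>auto simp: Pc_def\<close>)
    hence "Pc l a M r = Xi l a*(r-x1)*(r-x2)*(r-x3)" for r unfolding Pc_def by (simp add: algebra_simps)
    thus ?thesis using that[of x1 x2] x1 x2 by simp
  qed
  have pos2: "0 < s \<Longrightarrow> 0 < s^2+a^2" for s by (simp add: add_pos_nonneg)
  have I: "rp < r \<Longrightarrow> r < rpb \<Longrightarrow> r > 0" for r using o by linarith
  have sgnP: "Xi l a*(r-x1)*(r-x2) > 0" if "rp \<le> r" for r
    using Xi0 x12 that by (intro mult_pos_pos) auto
  have Pzero: "Pc l a M r = 0 \<longleftrightarrow> r = x3" if "rp \<le> r" for r
    using sgnP[OF that] unfolding Pfac by auto
  have rf: "r_frac l a M rp rpb = x3"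
    unfolding r_frac_def
  proof (rule the_equality)
    have "deriv f x3 = -2*Pc l a M x3/(x3^2+a^2)^3"
      by (rule DERIV_imp_deriv[OF fD]) (use posI x3 o in auto)
    thus "rp < x3 \<and> x3 < rpb \<and> deriv (\<lambda>s. Delta l a M s / (s\<^sup>2 + a\<^sup>2)\<^sup>2) x3 = 0"
      using x3 unfolding f_def by simp
  next
    fix r assume r: "rp < r \<and> r < rpb \<and> deriv (\<lambda>s. Delta l a M s / (s\<^sup>2 + a\<^sup>2)\<^sup>2) r = 0"
    have nz: "r^2+a^2 \<noteq> 0" using posI I r by auto
    have "deriv f r = -2*Pc l a M r/(r^2+a^2)^3"
      by (rule DERIV_imp_deriv[OF fD[OF nz]])
    hence "Pc l a M r = 0" using r nz unfolding f_def by simp blast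
    thus "r = x3" using Pzero r by auto
  qed
  define v0 where "v0 = V_axi l a M x3"
  have hV: "(V_axi l a M has_real_derivative 2*(x^2+a^2)*Pc l a M x/(Delta l a M x)^2) (at x)"
    if "rp < x" "x < rpb" for x using DERIV_V[OF l0] Dpos[OF that] by simp
  have Vgt: "V_axi l a M r > v0" if "rp < r" "r < rpb" "r \<noteq> x3" for r
  proof (cases "r < x3")
    case True
    have "\<exists>z>r. z < x3 \<and> V_axi l a M x3 - V_axi l a M r = (x3 - r) * (2*(z^2+a^2)*Pc l a M z/(Delta l a M z)^2)"
      using hV that x3 True by (intro MVT2[OF True]) auto
    then obtain z where zz: "r < z" "z < x3" "V_axi l a M x3 - V_axi l a M r = (x3 - r) * (2*(z^2+a^2)*Pc l a M z/(Delta l a M z)^2)" by blast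
    have "Pc l a M z < 0" unfolding Pfac using sgnP[of z] zz that by (simp add: mult_pos_neg)
    moreover have "z^2+a^2 > 0" using pos2[of z] zz that o by linarith
    moreover have "Delta l a M z \<noteq> 0" using Dpos[of z] zz that x3 by simp
    ultimately have "2*(z^2+a^2)*Pc l a M z/(Delta l a M z)^2 < 0"
      by (simp add: divide_neg_pos mult_pos_neg)
    hence "(x3 - r) * (2*(z^2+a^2)*Pc l a M z/(Delta l a M z)^2) < 0" using True by (intro mult_pos_neg) auto
    thus ?thesis using zz(3) unfolding v0_def by linarith
  next
    case False
    hence F: "x3 < r" using that by simp
    have "\<exists>z>x3. z < r \<and> V_axi l a M r - V_axi l a M x3 = (r - x3) * (2*(z^2+a^2)*Pc l a M z/(Delta l a M z)^2)"
      using hV that x3 F by (intro MVT2[OF F]) auto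
    then obtain z where zz: "x3 < z" "z < r" "V_axi l a M r - V_axi l a M x3 = (r - x3) * (2*(z^2+a^2)*Pc l a M z/(Delta l a M z)^2)" by blast
    have "Pc l a M z > 0" unfolding Pfac using sgnP[of z] zz that x3 by simp
    moreover have "z^2+a^2 > 0" using pos2[of z] zz x3 o by linarith
    moreover have "Delta l a M z \<noteq> 0" using Dpos[of z] zz that x3 by simp
    ultimately have "2*(z^2+a^2)*Pc l a M z/(Delta l a M z)^2 > 0"
      by (simp add: divide_pos_pos)
    hence "(r - x3) * (2*(z^2+a^2)*Pc l a M z/(Delta l a M z)^2) > 0" using F by (intro mult_pos_pos) auto
    thus ?thesis using zz(3) unfolding v0_def by linarith
  qed
  have vmin: "V_min l a M rp rpb = v0"
    unfolding V_min_def v0_def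
    by (rule cInf_eq_minimum) (use x3 Vgt v0_def in \<open>auto, metis less_imp_le order.refl\<close>)
  define R where "R = Rf l a M v0 x3"
  define Rd' where "Rd' = Rd l a M v0 x3"
  have D3: "Delta l a M x3 > 0" using Dpos x3 by simp
  have Q0: "Qf l a M v0 x3 = 0" unfolding Qf_def v0_def V_axi_def using D3 by simp
  have "Qd l a M v0 x3 * Delta l a M x3 = 0" using QW_id[of l a M v0 x3] Q0 x3(3) by simp
  hence Qd0: "Qd l a M v0 x3 = 0" using D3 by simp
  have Qeq: "Qf l a M v0 r = (r-x3)^2 * R r" for r using Q_id[of l a M v0 r x3] Q0 Qd0 unfolding R_def by simp
  have Qdeq: "Qd l a M v0 r = 2*(r-x3)*R r + (r-x3)^2 * Rd' r" for r
    using Qd_id[of l a M v0 r x3] Qd0 unfolding R_def Rd'_def by simp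
  have Vdiff: "V_axi l a M r - v0 = Qf l a M v0 r / Delta l a M r" if "rp < r" "r < rpb" for r
    using Dpos[OF that] unfolding Qf_def V_axi_def by (simp add: field_simps)
  have Rpos1: "R r > 0" if "rp \<le> r" "r \<le> rpb" "r \<noteq> x3" for r
  proof -
    have "Qf l a M v0 r > 0"
    proof (cases "r = rp \<or> r = rpb")
      case True
      hence "Delta l a M r = 0" using z by auto
      moreover have "r^2+a^2 > 0" using pos2[of r] that o by linarith
      hence "(r^2+a^2)^2 > 0" by (rule zero_less_power)
      ultimately show ?thesis unfolding Qf_def by (simp only: mult_zero_right diff_zero)
    next
      case False
      hence r: "rp < r" "r < rpb" using that by auto
      have "Qf l a M v0 r = (V_axi l a M r - v0) * Delta l a M r" using Vdiff[OF r] Dpos[OF r] by simp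
      thus ?thesis using Vgt[OF r that(3)] Dpos[OF r] by simp
    qed
    hence "(r-x3)^2 * R r > 0" using Qeq by simp
    moreover have "(r-x3)^2 > 0" using that by simp
    ultimately show ?thesis by (simp add: zero_less_mult_iff)
  qed
  define W where "W = (\<lambda>r. 2*R r*Delta l a M r + (r-x3)*(Rd' r*Delta l a M r - R r*dD l a M r))"
  have Wid: "(r-x3)*W r = (r-x3)*(2*Xi l a*(r^2+a^2)*(r-x1)*(r-x2))" for r
  proof -
    have gen: "\<And>y A B C E::real. y*(2*A*B + y*(C*B - A*E)) = (2*y*A + y^2*C)*B - y^2*A*E"
      by (simp add: algebra_simps power2_eq_square)
    have gen2: "\<And>y A B C::real. 2*A*(B*C*y) = y*(2*B*A*C)" by (simp add: ac_simps)
    have "(r-x3)*W r = Qd l a M v0 r * Delta l a M r - Qf l a M v0 r * dD l a M r"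
      unfolding Qeq Qdeq W_def gen by (simp only: mult.assoc)
    also have "\<dots> = 2*(r^2+a^2)*Pc l a M r" by (rule QW_id)
    also have "\<dots> = 2*(r^2+a^2)*(Xi l a*((r-x1)*(r-x2))*(r-x3))" unfolding Pfac by (simp only: mult.assoc)
    also have "\<dots> = (r-x3)*(2*Xi l a*(r^2+a^2)*((r-x1)*(r-x2)))" by (rule gen2)
    finally show ?thesis by (simp only: mult.assoc)
  qed
  have Weq: "W r = 2*Xi l a*(r^2+a^2)*(r-x1)*(r-x2)" for r
  proof (cases "r = x3")
    case False thus ?thesis using Wid[of r] by simp
  next
    case True
    have cR: "isCont R x" for x unfolding R_def by (rule DERIV_isCont[OF DERIV_Rf[OF l0]])
    have cD: "isCont (Delta l a M) x" for x by (rule DERIV_isCont[OF DERIV_Delta[OF l0]])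
    have cRd: "isCont Rd' x" for x unfolding Rd'_def Rd_def by (auto intro!: continuous_intros simp: l0)
    have cdD: "isCont (dD l a M) x" for x unfolding dD_def by (auto intro!: continuous_intros simp: l0)
    have "W x3 = (\<lambda>r. 2*Xi l a*(r^2+a^2)*(r-x1)*(r-x2)) x3"
    proof (rule cont_eq_at[where g=W and c=x3 and h="\<lambda>r. 2*Xi l a*(r^2+a^2)*(r-x1)*(r-x2)"])
      show "isCont W x3" unfolding W_def
        by (intro continuous_intros cR cD cRd cdD)
      show "isCont (\<lambda>r. 2*Xi l a*(r^2+a^2)*(r-x1)*(r-x2)) x3" by (intro continuous_intros)
      show "W x = 2*Xi l a*(x^2+a^2)*(x-x1)*(x-x2)" if "x \<noteq> x3" for x using Wid[of x] that by simp
    qed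
    thus ?thesis using True by simp
  qed
  have Rx3: "R x3 > 0"
  proof -
    have "W x3 = 2*R x3*Delta l a M x3" unfolding W_def by simp
    moreover have "W x3 > 0"
    proof -
      have "W x3 = 2*(x3^2+a^2)*(Xi l a*(x3-x1)*(x3-x2))" unfolding Weq by (simp only: ac_simps)
      moreover have "x3^2+a^2 > 0" using pos2[of x3] x3 o by linarith
      ultimately show ?thesis using sgnP[of x3] x3 by simp
    qed
    ultimately show ?thesis using D3 by (simp add: zero_less_mult_iff)
  qed
  have Rpos: "R r > 0" if "rp \<le> r" "r \<le> rpb" for r using Rpos1[OF that] Rx3 by (cases "r = x3") auto
  define S where "S = {rp<..<rpb}"
  have oS: "open S" unfolding S_def by simp
  have x3S: "x3 \<in> S" unfolding S_def using x3 by simp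
  define H where "H = (\<lambda>r. (r-x3)* sqrt(R r)/sqrt(Delta l a M r))"
  define Hd where "Hd = (\<lambda>r. Xi l a*(r^2+a^2)*(r-x1)*(r-x2)/(sqrt(R r)*Delta l a M r* sqrt(Delta l a M r)))"
  have G2H: "G2 l a M rp rpb r = H r" if "r \<in> S" for r
  proof -
    have r: "rp < r" "r < rpb" using that unfolding S_def by auto
    have "G2sq l a M rp rpb r = (r-x3)^2 * (R r / Delta l a M r)"
      unfolding G2sq_def vmin using Vdiff[OF r] Qeq by simp
    hence sq: "sqrt (G2sq l a M rp rpb r) = \<bar>r-x3\<bar> * (sqrt (R r) / sqrt (Delta l a M r))"
      by (simp add: real_sqrt_mult real_sqrt_divide)
    have g: "\<And>x y A B::real. -((x-y)*A/B) = (y-x)*A/B"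
      by (metis minus_diff_eq minus_divide_left minus_mult_left)
    show ?thesis unfolding G2_def rf sq H_def using g by auto
  qed
  have dsR: "((\<lambda>s. sqrt (R s)) has_real_derivative inverse (sqrt (R r)) / 2 * Rd' r) (at r)" if "R r > 0" for r
  proof -
    have dR: "(R has_real_derivative Rd' r) (at r)" unfolding R_def Rd'_def by (rule DERIV_Rf[OF l0])
    show ?thesis using DERIV_chain2[OF DERIV_real_sqrt[OF that] dR] .
  qed
  have dsD: "((\<lambda>s. sqrt (Delta l a M s)) has_real_derivative inverse (sqrt (Delta l a M r)) / 2 * dD l a M r) (at r)"
    if "Delta l a M r > 0" for r
    using DERIV_chain2[OF DERIV_real_sqrt[OF that] DERIV_Delta[OF l0]] .
  have gen: "((sR + y*(inverse sR/2*A))* sD - y* sR*(inverse sD/2*B))/(sD* sD)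
      = (2* sR^2* sD^2 + y*(A* sD^2 - sR^2*B))/(2* sR* sD^2* sD)" if "sR > 0" "sD > 0" for sR sD y A B :: real
    using that by (simp add: field_simps power2_eq_square)
  have HD: "(H has_real_derivative Hd r) (at r)" if "r \<in> S" for r
  proof -
    have r: "rp < r" "r < rpb" using that unfolding S_def by auto
    have Rr: "R r > 0" using Rpos r by simp
    have Dr: "Delta l a M r > 0" using Dpos r by simp
    have sDnz: "sqrt (Delta l a M r) \<noteq> 0" using Dr by simp
    note d = DERIV_divide[OF DERIV_mult[OF DERIV_diff[OF DERIV_ident DERIV_const] dsR[OF Rr]] dsD[OF Dr] sDnz]
    have cong: "\<And>f D E. (f has_real_derivative D) (at r) \<Longrightarrow> D = E \<Longrightarrow> (f has_real_derivative E) (at r)" by simp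
    have p1: "sqrt (R r) > 0" "sqrt (Delta l a M r) > 0" using Rr Dr by auto
    have e: "W r = 2*Xi l a*(r^2+a^2)*(r-x1)*(r-x2)" by (rule Weq)
    show ?thesis unfolding H_def
      apply (rule cong[OF d])
      unfolding Hd_def
      apply (rule alg[OF p1])
        apply (use Rr in simp)
       apply (use Dr in simp)
      using e unfolding W_def by (simp add: algebra_simps)
  qed
  have G2D: "(G2 l a M rp rpb has_real_derivative Hd r) (at r)" if "r \<in> S" for r
    by (rule has_field_derivative_transform_within_open[OF HD[OF that] oS that]) (use G2H in auto)
  have dG2: "deriv (G2 l a M rp rpb) r = Hd r" if "r \<in> S" for r
    using DERIV_imp_deriv[OF G2D[OF that]] .
  have c3: "\<forall>r\<in>{rp<..<rpb}. G2 l a M rp rpb differentiable at r"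
    using G2D unfolding S_def real_differentiable_def by blast
  have c1: "\<forall>\<^sub>F s in nhds (r_frac l a M rp rpb). G2 l a M rp rpb differentiable at s"
    unfolding rf eventually_nhds using oS x3S c3 S_def by blast
  have c2: "deriv (G2 l a M rp rpb) differentiable at (r_frac l a M rp rpb)"
  proof -
    have Rr: "R x3 > 0" by (rule Rx3)
    have difR: "(\<lambda>s. sqrt (R s)) differentiable at x3"
      using dsR[OF Rr] unfolding real_differentiable_def by blast
    have difD: "(\<lambda>s. sqrt (Delta l a M s)) differentiable at x3"
      using dsD[OF D3] unfolding real_differentiable_def by blast
    have difD0: "Delta l a M differentiable at x3"
      using DERIV_Delta[OF l0] unfolding real_differentiable_def by blast
    have difN: "(\<lambda>r. Xi l a*(r^2+a^2)*(r-x1)*(r-x2)) differentiable at x3"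
      by (intro derivative_intros)
    have "Hd differentiable at x3"
      unfolding Hd_def
      by (intro differentiable_divide differentiable_mult difN difR difD difD0) (use Rr D3 in simp)
    then obtain E where E: "(Hd has_real_derivative E) (at x3)" unfolding real_differentiable_def by blast
    have "(deriv (G2 l a M rp rpb) has_real_derivative E) (at x3)"
      by (rule has_field_derivative_transform_within_open[OF E oS x3S]) (use dG2 in auto)
    thus ?thesis unfolding rf real_differentiable_def by blast
  qed
  have c4: "\<exists>b>0. \<forall>r\<in>{rp<..<rpb}.
           2 * V_axi l a M r * G2' l a M rp rpb r / g1 l a M r
             \<ge> b * (r\<^sup>2 + a\<^sup>2) / (r * Delta l a M r)"
  proof -
    define Phi where "Phi = (\<lambda>r. 2*Xi l a*r*(r-x1)*(r-x2)/sqrt(R r))"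
    have cPhi: "continuous_on {rp..rpb} Phi"
    proof (intro continuous_at_imp_continuous_on ballI)
      fix x assume x: "x \<in> {rp..rpb}"
      have Rx: "R x > 0" using Rpos x by simp
      have "isCont (\<lambda>s. sqrt (R s)) x" using DERIV_isCont[OF dsR[OF Rx]] .
      moreover have "isCont R x" unfolding R_def by (rule DERIV_isCont[OF DERIV_Rf[OF l0]])
      ultimately show "isCont Phi x" unfolding Phi_def using Rx by (intro continuous_intros) auto
    qed
    obtain xm where xm: "xm \<in> {rp..rpb}" "\<And>y. y \<in> {rp..rpb} \<Longrightarrow> Phi xm \<le> Phi y"
      using continuous_attains_inf[OF compact_Icc _ cPhi] o by auto
    have bpos: "Phi xm > 0"
    proof -
      have "2*Xi l a*xm*(xm-x1)*(xm-x2) > 0" using Xi0 xm(1) o x12 by (intro mult_pos_pos) auto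
      moreover have "sqrt (R xm) > 0" using Rpos xm(1) by simp
      ultimately show ?thesis unfolding Phi_def by simp
    qed
    show ?thesis
    proof (intro exI[of _ "Phi xm"] conjI ballI bpos)
      fix r assume rS: "r \<in> {rp<..<rpb}"
      hence r: "rp < r" "r < rpb" by auto
      have Sr: "r \<in> S" using rS S_def by simp
      have Dr: "Delta l a M r > 0" using Dpos r by simp
      have Rr: "R r > 0" using Rpos r by simp
      have A: "r^2+a^2 > 0" using pos2[of r] r o by linarith
      have "2 * V_axi l a M r * G2' l a M rp rpb r / g1 l a M r
        = 2*((r^2+a^2)^2/Delta l a M r)*((Xi l a*(r^2+a^2)*(r-x1)*(r-x2)/(sqrt(R r)*Delta l a M r* sqrt(Delta l a M r)))*Delta l a M r/(r^2+a^2))/((r^2+a^2)/sqrt(Delta l a M r))"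
        unfolding V_axi_def G2'_def g1_def dG2[OF Sr] Hd_def by simp
      moreover have "Phi xm * (r^2+a^2) / (r * Delta l a M r) \<le> \<dots>"
        by (rule fin_ineq) (use A Dr Rr r o xm(2)[of r] in \<open>auto simp: Phi_def\<close>)
      ultimately show "Phi xm * (r^2+a^2) / (r * Delta l a M r) \<le> 2 * V_axi l a M r * G2' l a M rp rpb r / g1 l a M r"
        by simp
    qed
  qed
  show ?thesis using c1 c2 c3 c4 by blast
qed
end
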